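(* Let $\mathsf{L}$ be a logic, $\mathcal{C}$ a class of $\mathsf{L}$-models, and $\Theta=(\Theta_M)_{M\in\mathcal{C}}$ an $(\mathsf{L},\mathcal{C})$-pair. Then for every fragment $\mathsf{L}'$ of $\mathsf{L}$ and every $\mathcal{C}$-sample $\mathcal{S}=(\mathcal{P},\mathcal{N})$, the sample $\mathcal{S}$ is $\mathsf{L}'$-separable if and only if there is an $\mathcal{S}$-separating $\mathsf{L}'$-formula $\varphi$ with $\mathsf{sz}(\varphi)\le n^{\mathcal{S}}_{\Theta}:=\sum_{\tau\in\mathcal{T}}\prod_{M\in\mathcal{P}\cup\mathcal{N}}|\mathsf{SEM}_M(\tau)|$.
   Context: A logic $\mathsf{L}$ is given by a syntax $(\mathcal{T},\mathcal{T}_f,\mathsf{Op},(\tau_o)_{o\in\mathsf{Op}},T)$: $\mathcal{T}$ is a non-empty finite set of types, $\emptyset\neq\mathcal{T}_f\subseteq\mathcal{T}$ is the set of final types, $\mathsf{Op}=\mathsf{Op}_0\uplus\mathsf{Op}_1\uplus\mathsf{Op}_2$ is a set of operators ($\mathsf{Op}_i$ = operators of arity $i$) with $\mathsf{Op}_0\neq\emptyset$; each operator $o$ has a type $\tau_o\in\mathcal{T}$, and for each argument position $i$ of $o$ a set $T(o,i)\subseteq\mathcal{T}$ of allowed argument types. The sets $\mathsf{Fm}_{\mathsf{L}}(\tau)$ of $\mathsf{L}$-formulas of type $\tau$ are defined inductively: each $o\in\mathsf{Op}_0$ is a formula of type $\tau_o$; if $o\in\mathsf{Op}_1$ and $\varphi_1$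 has a type in $T(o,1)$ then $o(\varphi_1)$ has type $\tau_o$; if $o\in\mathsf{Op}_2$ and $\varphi_i$ has a type in $T(o,i)$ ($i=1,2$) then $o(\varphi_1,\varphi_2)$ has type $\tau_o$. For $X\subseteq\mathcal{T}$, $\mathsf{Fm}_{\mathsf{L}}(X)=\bigcup_{\tau\in X}\mathsf{Fm}_{\mathsf{L}}(\tau)$; $\mathsf{Fm}_{\mathsf{L}}=\mathsf{Fm}_{\mathsf{L}}(\mathcal{T})$ and the final formulas are $\mathsf{Fm}^f_{\mathsf{L}}=\mathsf{Fm}_{\mathsf{L}}(\mathcal{T}_f)$. A fragment $\mathsf{L}'$ of $\mathsf{L}$ is a logic with the same syntax except that its operator set is some $\mathsf{Op}'\subseteq\mathsf{Op}$. The set $\mathsf{Sub}(\varphi)$ of subformulas is defined inductively ($\mathsf{Sub}(o)=\{o\}$, $\mathsf{Sub}(o(\varphi_1))=\{o(\varphi_1)\}\cup\mathsf{Sub}(\varphi_1)$, $\mathsf{Sub}(o(\varphi_1,\varphi_2))=\{o(\varphi_1,\varphi_2)\}\cup\mathsf{Sub}(\varphi_1)\cup\mathsf{Sub}(\varphi_2)$), and the size is $\mathsf{sz}(\varphi)=|\mathsf{Sub}(\varphi)|$ (number of distinct subformulas). An $\mathsf{L}$-model is a structure $M$ together with a satisfaction relation $M\models\varphi$ for final $\mathsf{L}$-formulas $\varphi$; a class of $\mathsf{L}$-models is a set of $\mathsf{L}$-models. A $\mathcal{C}$-sample is a pair $(\mathcal{P},\mathcal{N})$ of finite subsets of $\mathcal{C}$.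 A final $\mathsf{L}'$-formula $\varphi$ is $\mathcal{S}$-separating if $M\models\varphi$ for all $M\in\mathcal{P}$ and $M\not\models\varphi$ for all $M\in\mathcal{N}$; $\mathcal{S}$ is $\mathsf{L}'$-separable if such a formula exists. For an $\mathsf{L}$-model $M$, an $(\mathsf{L},M)$-pair $(\mathsf{SEM}_M,\mathsf{sem}_M)$ consists of a finite set $\mathsf{SEM}_M=\bigcup_{\tau\in\mathcal{T}}\mathsf{SEM}_M(\tau)$ with the $\mathsf{SEM}_M(\tau)$ pairwise disjoint, and a map $\mathsf{sem}_M:\mathsf{Fm}_{\mathsf{L}}\to\mathsf{SEM}_M$ with $\mathsf{sem}_M(\varphi)\in\mathsf{SEM}_M(\tau)$ whenever $\varphi\in\mathsf{Fm}_{\mathsf{L}}(\tau)$; write $\mathsf{SEM}_M(X)=\bigcup_{\tau\in X}\mathsf{SEM}_M(\tau)$. It captures the $\mathsf{L}$-semantics if for every $\tau\in\mathcal{T}$ and all final $\varphi,\varphi'$ of type $\tau$, $\mathsf{sem}_M(\varphi)=\mathsf{sem}_M(\varphi')$ implies ($M\models\varphi$ iff $M\models\varphi'$). It satisfies the inductive property if for every $o\in\mathsf{Op}_1$ there is a function $\mathsf{sem}^o_M:\mathsf{SEM}_M(T(o,1))\to\mathsf{SEM}_M(\tau_o)$ with $\mathsf{sem}_M(o(\varphi_1))=\mathsf{sem}^o_M(\mathsf{sem}_M(\varphi_1))$ for all $\varphi_1\in\mathsf{Fm}_{\mathsf{L}}(T(o,1))$, and for every $o\in\mathsf{Op}_2$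 there is a function $\mathsf{sem}^o_M:\mathsf{SEM}_M(T(o,1))\times\mathsf{SEM}_M(T(o,2))\to\mathsf{SEM}_M(\tau_o)$ with $\mathsf{sem}_M(o(\varphi_1,\varphi_2))=\mathsf{sem}^o_M(\mathsf{sem}_M(\varphi_1),\mathsf{sem}_M(\varphi_2))$ for all $\varphi_i\in\mathsf{Fm}_{\mathsf{L}}(T(o,i))$. An $(\mathsf{L},\mathcal{C})$-pair is a family $\Theta=(\Theta_M)_{M\in\mathcal{C}}$ where each $\Theta_M=(\mathsf{SEM}_M,\mathsf{sem}_M)$ is an $(\mathsf{L},M)$-pair that both captures the $\mathsf{L}$-semantics and satisfies the inductive property. *)

theory Defs
  imports Main "HOL-Library.FuncSet"
begin

datatype 'o fm = F0 'o | F1 'o "'o fm" | F2 'o "'o fm" "'o fm"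

text \<open>A syntax: types, final types, operators of arity 0/1/2, the type of each
operator, and the allowed argument types T(op,i) (argument positions i = 1, 2).\<close>
record ('t, 'o) logic =
  Tys :: "'t set"
  FinTys :: "'t set"
  Ops0 :: "'o set"
  Ops1 :: "'o set"
  Ops2 :: "'o set"
  tyOf :: "'o \<Rightarrow> 't"
  argTys :: "'o \<Rightarrow> nat \<Rightarrow> 't set"

definition Ops :: "('t, 'o) logic \<Rightarrow> 'o set" where
  "Ops L = Ops0 L \<union> Ops1 L \<union> Ops2 L"

definition is_logic :: "('t, 'o) logic \<Rightarrow> bool" where
  "is_logic L \<longleftrightarrow>
     finite (Tys L) \<and> Tys L \<noteq> {} \<and>
     FinTys L \<noteq> {} \<and> FinTys L \<subseteq> Tys L \<and>
     Ops0 L \<inter> Ops1 L = {} \<and> Ops0 L \<inter> Ops2 L = {} \<and> Ops1 L \<inter> Ops2 L = {} \<and>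
     Ops0 L \<noteq> {} \<and>
     (\<forall>op \<in> Ops L. tyOf L op \<in> Tys L) \<and>
     (\<forall>op \<in> Ops1 L. argTys L op 1 \<subseteq> Tys L) \<and>
     (\<forall>op \<in> Ops2 L. argTys L op 1 \<subseteq> Tys L \<and> argTys L op 2 \<subseteq> Tys L)"

definition fragment :: "('t, 'o) logic \<Rightarrow> ('t, 'o) logic \<Rightarrow> bool" where
  "fragment L' L \<longleftrightarrow> is_logic L' \<and>
     Tys L' = Tys L \<and> FinTys L' = FinTys L \<and> tyOf L' = tyOf L \<and> argTys L' = argTys L \<and>
     Ops0 L' \<subseteq> Ops0 L \<and> Ops1 L' \<subseteq> Ops1 L \<and> Ops2 L' \<subseteq> Ops2 L"

fun fty :: "('t, 'o) logic \<Rightarrow> 'o fm \<Rightarrow> 't" where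
  "fty L (F0 op) = tyOf L op"
| "fty L (F1 op a) = tyOf L op"
| "fty L (F2 op a b) = tyOf L op"

fun wf :: "('t, 'o) logic \<Rightarrow> 'o fm \<Rightarrow> bool" where
  "wf L (F0 op) = (op \<in> Ops0 L)"
| "wf L (F1 op a) = (op \<in> Ops1 L \<and> wf L a \<and> fty L a \<in> argTys L op 1)"
| "wf L (F2 op a b) = (op \<in> Ops2 L \<and> wf L a \<and> fty L a \<in> argTys L op 1
                       \<and> wf L b \<and> fty L b \<in> argTys L op 2)"

definition Fm :: "('t, 'o) logic \<Rightarrow> 't \<Rightarrow> 'o fm set" where
  "Fm L \<tau> = {\<phi>. wf L \<phi> \<and> fty L \<phi> = \<tau>}"

definition FmS :: "('t, 'o) logic \<Rightarrow> 't set \<Rightarrow> 'o fm set" where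
  "FmS L X = (\<Union>\<tau>\<in>X. Fm L \<tau>)"

definition FinFm :: "('t, 'o) logic \<Rightarrow> 'o fm set" where
  "FinFm L = FmS L (FinTys L)"

fun Sub :: "'o fm \<Rightarrow> 'o fm set" where
  "Sub (F0 op) = {F0 op}"
| "Sub (F1 op a) = insert (F1 op a) (Sub a)"
| "Sub (F2 op a b) = insert (F2 op a b) (Sub a \<union> Sub b)"

definition sz :: "'o fm \<Rightarrow> nat" where
  "sz \<phi> = card (Sub \<phi>)"

text \<open>Separation. Models have type 'm with satisfaction relation sat
(only consulted on final formulas).\<close>
definition separating ::
  "('t, 'o) logic \<Rightarrow> ('m \<Rightarrow> 'o fm \<Rightarrow> bool) \<Rightarrow> 'm set \<Rightarrow> 'm set \<Rightarrow> 'o fm \<Rightarrow> bool" where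
  "separating L' sat P N \<phi> \<longleftrightarrow> \<phi> \<in> FinFm L' \<and>
     (\<forall>M\<in>P. sat M \<phi>) \<and> (\<forall>M\<in>N. \<not> sat M \<phi>)"

definition separable ::
  "('t, 'o) logic \<Rightarrow> ('m \<Rightarrow> 'o fm \<Rightarrow> bool) \<Rightarrow> 'm set \<Rightarrow> 'm set \<Rightarrow> bool" where
  "separable L' sat P N \<longleftrightarrow> (\<exists>\<phi>. separating L' sat P N \<phi>)"

definition SEMS :: "('t \<Rightarrow> 's set) \<Rightarrow> 't set \<Rightarrow> 's set" where
  "SEMS SEMM X = (\<Union>\<tau>\<in>X. SEMM \<tau>)"

text \<open>(L,M)-pair: SEM_M given typewise, sem_M a map on all formulas.\<close>
definition LM_pair :: "('t, 'o) logic \<Rightarrow> ('t \<Rightarrow> 's set) \<Rightarrow> ('o fm \<Rightarrow> 's) \<Rightarrow> bool" where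
  "LM_pair L SEMM semM \<longleftrightarrow>
     finite (SEMS SEMM (Tys L)) \<and>
     (\<forall>\<tau>\<in>Tys L. \<forall>\<tau>'\<in>Tys L. \<tau> \<noteq> \<tau>' \<longrightarrow> SEMM \<tau> \<inter> SEMM \<tau>' = {}) \<and>
     (\<forall>\<tau>\<in>Tys L. \<forall>\<phi>\<in>Fm L \<tau>. semM \<phi> \<in> SEMM \<tau>)"

definition captures ::
  "('t, 'o) logic \<Rightarrow> ('o fm \<Rightarrow> bool) \<Rightarrow> ('o fm \<Rightarrow> 's) \<Rightarrow> bool" where
  "captures L satM semM \<longleftrightarrow>
     (\<forall>\<tau>\<in>Tys L. \<forall>\<phi>\<in>Fm L \<tau> \<inter> FinFm L. \<forall>\<phi>'\<in>Fm L \<tau> \<inter> FinFm L.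
        semM \<phi> = semM \<phi>' \<longrightarrow> (satM \<phi> \<longleftrightarrow> satM \<phi>'))"

definition inductive_prop ::
  "('t, 'o) logic \<Rightarrow> ('t \<Rightarrow> 's set) \<Rightarrow> ('o fm \<Rightarrow> 's) \<Rightarrow> bool" where
  "inductive_prop L SEMM semM \<longleftrightarrow>
     (\<forall>op\<in>Ops1 L. \<exists>f. f \<in> SEMS SEMM (argTys L op 1) \<rightarrow> SEMM (tyOf L op) \<and>
        (\<forall>\<phi>1\<in>FmS L (argTys L op 1). semM (F1 op \<phi>1) = f (semM \<phi>1))) \<and>
     (\<forall>op\<in>Ops2 L. \<exists>f. (\<forall>x\<in>SEMS SEMM (argTys L op 1). \<forall>y\<in>SEMS SEMM (argTys L op 2).
                          f x y \<in> SEMM (tyOf L op)) \<and>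
        (\<forall>\<phi>1\<in>FmS L (argTys L op 1). \<forall>\<phi>2\<in>FmS L (argTys L op 2).
           semM (F2 op \<phi>1 \<phi>2) = f (semM \<phi>1) (semM \<phi>2)))"

definition LC_pair ::
  "('t, 'o) logic \<Rightarrow> 'm set \<Rightarrow> ('m \<Rightarrow> 'o fm \<Rightarrow> bool) \<Rightarrow>
   ('m \<Rightarrow> 't \<Rightarrow> 's set) \<Rightarrow> ('m \<Rightarrow> 'o fm \<Rightarrow> 's) \<Rightarrow> bool" where
  "LC_pair L C sat SEM sem \<longleftrightarrow>
     (\<forall>M\<in>C. LM_pair L (SEM M) (sem M) \<and> captures L (sat M) (sem M) \<and>
             inductive_prop L (SEM M) (sem M))"

definition size_bound ::
  "('t, 'o) logic \<Rightarrow> ('m \<Rightarrow> 't \<Rightarrow> 's set) \<Rightarrow> 'm set \<Rightarrow> 'm set \<Rightarrow> nat" where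
  "size_bound L SEM P N = (\<Sum>\<tau>\<in>Tys L. \<Prod>M\<in>P \<union> N. card (SEM M \<tau>))"

end

theory Submission
  imports Defs
begin

lemma fty_frag: "fragment L' L \<Longrightarrow> fty L' \<phi> = fty L \<phi>"
  by (cases \<phi>) (auto simp: fragment_def)

lemma wf_mono:
  assumes "fragment L' L" shows "wf L' \<phi> \<Longrightarrow> wf L \<phi>"
  using assms by (induction \<phi>) (auto simp: fragment_def fty_frag[OF assms])

lemma fty_in_Tys: "is_logic L \<Longrightarrow> wf L \<phi> \<Longrightarrow> fty L \<phi> \<in> Tys L"
  by (cases \<phi>) (auto simp: is_logic_def Ops_def)

lemma Sub_self: "\<phi> \<in> Sub \<phi>"
  by (cases \<phi>) auto

theorem theorem1:
  fixes L L' :: "('t, 'o) logic"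
    and C P N :: "'m set"
    and sat :: "'m \<Rightarrow> 'o fm \<Rightarrow> bool"
    and SEM :: "'m \<Rightarrow> 't \<Rightarrow> 's set"
    and sem :: "'m \<Rightarrow> 'o fm \<Rightarrow> 's"
  assumes "is_logic L"
    and "LC_pair L C sat SEM sem"
    and "fragment L' L"
    and "finite P" and "finite N" and "P \<subseteq> C" and "N \<subseteq> C"
  shows "separable L' sat P N \<longleftrightarrow>
         (\<exists>\<phi>. separating L' sat P N \<phi> \<and> sz \<phi> \<le> size_bound L SEM P N)"
proof
  assume "\<exists>\<phi>. separating L' sat P N \<phi> \<and> sz \<phi> \<le> size_bound L SEM P N"
  then show "separable L' sat P N" by (auto simp: separable_def)
next
  assume "separable L' sat P N"
  then obtain \<phi> where sep: "separating L' sat P N \<phi>" by (auto simp: separable_def)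
  note isl = assms(1) and LC = assms(2) and fr = assms(3)
  define Q where "Q = P \<union> N"
  have finQ: "finite Q" using assms(4,5) by (simp add: Q_def)
  have QC: "Q \<subseteq> C" using assms(6,7) by (simp add: Q_def)
  define key where "key = (\<lambda>s. (fty L s, restrict (\<lambda>M. sem M s) Q))"
  define Keys where "Keys = Sigma (Tys L) (\<lambda>\<tau>. PiE Q (\<lambda>M. SEM M \<tau>))"
  have LM: "\<And>M. M \<in> Q \<Longrightarrow> LM_pair L (SEM M) (sem M)"
    and cap: "\<And>M. M \<in> Q \<Longrightarrow> captures L (sat M) (sem M)"
    and ind: "\<And>M. M \<in> Q \<Longrightarrow> inductive_prop L (SEM M) (sem M)"
    using LC QC unfolding LC_pair_def by auto
  have finSEM: "\<And>M \<tau>. M \<in> Q \<Longrightarrow> \<tau> \<in> Tys L \<Longrightarrow> finite (SEM M \<tau>)"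
  proof -
    fix M \<tau> assume "M \<in> Q" "\<tau> \<in> Tys L"
    then show "finite (SEM M \<tau>)"
      using LM[of M] unfolding LM_pair_def SEMS_def
      by (meson UN_I finite_subset subsetI)
  qed
  have finTys: "finite (Tys L)" using isl by (simp add: is_logic_def)
  have finKeys: "finite Keys" unfolding Keys_def
    using finTys finQ finSEM by (auto intro!: finite_SigmaI finite_PiE)
  have cardKeys: "card Keys = size_bound L SEM P N"
    unfolding Keys_def size_bound_def Q_def[symmetric]
    using finTys finQ finSEM by (simp add: card_PiE finite_PiE)
  have keyin: "\<And>s. wf L' s \<Longrightarrow> key s \<in> Keys"
  proof -
    fix s assume w: "wf L' s"
    then have w2: "wf L s" using wf_mono[OF fr] by blast
    have ft: "fty L s \<in> Tys L" using fty_in_Tys[OF isl w2] .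
    have "\<forall>M\<in>Q. sem M s \<in> SEM M (fty L s)"
      using LM ft w2 unfolding LM_pair_def Fm_def by blast
    then show "key s \<in> Keys" using ft unfolding key_def Keys_def by auto
  qed
  define Good where "Good = {S. finite S \<and> (\<forall>s\<in>S. wf L' s \<and> Sub s \<subseteq> S) \<and> inj_on key S}"
  have cardGood: "\<And>S. S \<in> Good \<Longrightarrow> card S \<le> card Keys"
  proof -
    fix S assume "S \<in> Good"
    then have "inj_on key S" "key ` S \<subseteq> Keys" using keyin unfolding Good_def by auto
    then show "card S \<le> card Keys" using card_inj_on_le finKeys by blast
  qed
  have "{} \<in> Good" unfolding Good_def by auto
  have finC: "finite (card ` Good)"
    using cardGood by (meson finite_atMost finite_subset image_subsetI atMost_iff)
  define n where "n = Max (card ` Good)"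
  have "n \<in> card ` Good" unfolding n_def using finC \<open>{} \<in> Good\<close> by (intro Max_in) auto
  then obtain S where SG: "S \<in> Good" and cS: "card S = n" by auto
  have maxS: "\<And>S'. S' \<in> Good \<Longrightarrow> card S' \<le> card S"
    using cS finC unfolding n_def by auto
  have finS: "finite S" and wfS: "\<And>s. s \<in> S \<Longrightarrow> wf L' s" and subS: "\<And>s. s \<in> S \<Longrightarrow> Sub s \<subseteq> S"
    and injS: "inj_on key S" using SG unfolding Good_def by auto
  have sat_step: "key t \<in> key ` S"
    if wt: "wf L' t" and imm: "\<forall>u. u \<in> Sub t - {t} \<longrightarrow> u \<in> S" for t
  proof (rule ccontr)
    assume nk: "key t \<notin> key ` S"
    then have tS: "t \<notin> S" by auto
    have subt: "Sub t \<subseteq> insert t S" using imm by auto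
    have "insert t S \<in> Good"
      unfolding Good_def using finS wt wfS subS subt nk injS by auto
    then have "card (insert t S) \<le> card S" by (rule maxS)
    then show False using tS finS by simp
  qed
  have all: "wf L' \<psi> \<Longrightarrow> \<exists>s\<in>S. key s = key \<psi>" for \<psi>
  proof (induction \<psi>)
    case (F0 op)
    have "\<forall>u. u \<in> Sub (F0 op) - {F0 op} \<longrightarrow> u \<in> S" by simp
    from sat_step[OF F0.prems this] show ?case by force
  next
    case (F1 op a)
    from F1.prems have opin: "op \<in> Ops1 L'" and wa: "wf L' a" and ta: "fty L' a \<in> argTys L' op 1" by auto
    from F1.IH[OF wa] obtain a' where a'S: "a' \<in> S" and ka: "key a' = key a" by blast
    have wa': "wf L' a'" using wfS a'S by blast
    have tya: "fty L a' = fty L a" using ka unfolding key_def by simp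
    have wt: "wf L' (F1 op a')" using opin wa' ta tya fty_frag[OF fr] by auto
    have "\<forall>u. u \<in> Sub (F1 op a') - {F1 op a'} \<longrightarrow> u \<in> S" using subS[OF a'S] by auto
    from sat_step[OF wt this] obtain s where sS: "s \<in> S" and ks: "key s = key (F1 op a')" by auto
    have "key (F1 op a') = key (F1 op a)"
    proof -
      have "sem M (F1 op a') = sem M (F1 op a)" if MQ: "M \<in> Q" for M
      proof -
        have op1: "op \<in> Ops1 L" using opin fr unfolding fragment_def by auto
        obtain f where f: "\<forall>\<phi>1\<in>FmS L (argTys L op 1). sem M (F1 op \<phi>1) = f (sem M \<phi>1)"
          using ind[OF MQ] op1 unfolding inductive_prop_def by blast
        have "a \<in> FmS L (argTys L op 1)" "a' \<in> FmS L (argTys L op 1)"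
          using wa wa' ta tya wf_mono[OF fr] fty_frag[OF fr] fr
          unfolding FmS_def Fm_def fragment_def by auto
        moreover have "sem M a' = sem M a" using ka MQ unfolding key_def
          by (metis restrict_apply' snd_conv)
        ultimately show ?thesis using f by simp
      qed
      then show ?thesis unfolding key_def by auto
    qed
    then show ?case using sS ks by auto
  next
    case (F2 op a b)
    from F2.prems have opin: "op \<in> Ops2 L'" and wa: "wf L' a" and ta: "fty L' a \<in> argTys L' op 1"
      and wb: "wf L' b" and tb: "fty L' b \<in> argTys L' op 2" by auto
    from F2.IH(1)[OF wa] obtain a' where a'S: "a' \<in> S" and ka: "key a' = key a" by blast
    from F2.IH(2)[OF wb] obtain b' where b'S: "b' \<in> S" and kb: "key b' = key b" by blast
    have wa': "wf L' a'" using wfS a'S by blast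
    have wb': "wf L' b'" using wfS b'S by blast
    have tya: "fty L a' = fty L a" using ka unfolding key_def by simp
    have tyb: "fty L b' = fty L b" using kb unfolding key_def by simp
    have wt: "wf L' (F2 op a' b')" using opin wa' ta tya wb' tb tyb fty_frag[OF fr] by auto
    have "\<forall>u. u \<in> Sub (F2 op a' b') - {F2 op a' b'} \<longrightarrow> u \<in> S" using subS[OF a'S] subS[OF b'S] by auto
    from sat_step[OF wt this] obtain s where sS: "s \<in> S" and ks: "key s = key (F2 op a' b')" by auto
    have "key (F2 op a' b') = key (F2 op a b)"
    proof -
      have "sem M (F2 op a' b') = sem M (F2 op a b)" if MQ: "M \<in> Q" for M
      proof -
        have op2: "op \<in> Ops2 L" using opin fr unfolding fragment_def by auto
        obtain f where f: "\<forall>\<phi>1\<in>FmS L (argTys L op 1). \<forall>\<phi>2\<in>FmS L (argTys L op 2).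
           sem M (F2 op \<phi>1 \<phi>2) = f (sem M \<phi>1) (sem M \<phi>2)"
          using ind[OF MQ] op2 unfolding inductive_prop_def by blast
        have "a \<in> FmS L (argTys L op 1)" "a' \<in> FmS L (argTys L op 1)"
             "b \<in> FmS L (argTys L op 2)" "b' \<in> FmS L (argTys L op 2)"
          using wa wa' ta tya wb wb' tb tyb wf_mono[OF fr] fty_frag[OF fr] fr
          unfolding FmS_def Fm_def fragment_def by auto
        moreover have "sem M a' = sem M a" using ka MQ unfolding key_def
          by (metis restrict_apply' snd_conv)
        moreover have "sem M b' = sem M b" using kb MQ unfolding key_def
          by (metis restrict_apply' snd_conv)
        ultimately show ?thesis using f by simp
      qed
      then show ?thesis unfolding key_def by auto
    qed
    then show ?case using sS ks by auto
  qed
  from sep have phiF: "\<phi> \<in> FinFm L'" and satP: "\<forall>M\<in>P. sat M \<phi>" and satN: "\<forall>M\<in>N. \<not> sat M \<phi>"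
    unfolding separating_def by auto
  have wphi: "wf L' \<phi>" and tphi: "fty L' \<phi> \<in> FinTys L'"
    using phiF unfolding FinFm_def FmS_def Fm_def by auto
  obtain s where sS: "s \<in> S" and ks: "key s = key \<phi>" using all[OF wphi] by blast
  have ws: "wf L' s" using wfS sS by blast
  have tys: "fty L s = fty L \<phi>" using ks unfolding key_def by simp
  have wphiL: "wf L \<phi>" and wsL: "wf L s" using wphi ws wf_mono[OF fr] by auto
  have tF: "fty L \<phi> \<in> FinTys L" using tphi fr fty_frag[OF fr] unfolding fragment_def by auto
  have tT: "fty L \<phi> \<in> Tys L" using fty_in_Tys[OF isl wphiL] .
  have semeq: "\<And>M. M \<in> Q \<Longrightarrow> sem M s = sem M \<phi>"
    using ks unfolding key_def by (metis restrict_apply' snd_conv)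
  have satiff: "sat M s \<longleftrightarrow> sat M \<phi>" if MQ: "M \<in> Q" for M
  proof -
    have "\<phi> \<in> Fm L (fty L \<phi>) \<inter> FinFm L" "s \<in> Fm L (fty L \<phi>) \<inter> FinFm L"
      using wphiL wsL tys tF unfolding Fm_def FinFm_def FmS_def by auto
    then show ?thesis using cap[OF MQ] tT semeq[OF MQ] unfolding captures_def by blast
  qed
  have sepS: "separating L' sat P N s"
    unfolding separating_def
  proof (intro conjI)
    show "s \<in> FinFm L'" using ws tys tF fty_frag[OF fr] fr
      unfolding FinFm_def FmS_def Fm_def fragment_def by auto
    show "\<forall>M\<in>P. sat M s" using satP satiff unfolding Q_def by auto
    show "\<forall>M\<in>N. \<not> sat M s" using satN satiff unfolding Q_def by auto
  qed
  have "sz s \<le> card S" unfolding sz_def using subS[OF sS] finS by (rule card_mono[rotated])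
  also have "\<dots> \<le> card Keys" using cardGood SG by blast
  finally show "\<exists>\<phi>. separating L' sat P N \<phi> \<and> sz \<phi> \<le> size_bound L SEM P N"
    using sepS cardKeys by auto
qed

end
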